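(* In the setting of the context, fix $\varepsilon\in(0,1]$ and $x\in\mathbb{X}$, let $P_x(s)=|\psi_x^+(s,\varepsilon)\rangle\langle\psi_x^+(s,\varepsilon)|$, $N_x=\|\,|\Psi_x^+(s,\varepsilon)\rangle\|$ (independent of $s$), and $$X_x(s)=\frac{\pi}{2N_x}\,|\Psi_x^-(s,\varepsilon)\rangle\langle\psi_x^+(s,\varepsilon)|,\qquad s\in[0,1].$$ Then $[H_x(s,\varepsilon),X_x(s)]=H_x(s,\varepsilon)X_x(s)=\dot P_x(s)P_x(s)$ for all $s\in[0,1]$ (dot denotes $\partial_s$). If moreover $W\ge\varepsilon/2$, then for all $s\in[0,1]$ $$\|X_x(s)\|\le\frac{\pi\sqrt5}{2}\,\frac{W}{\varepsilon},\qquad \|\dot X_x(s)P_x(s)\|\le\frac{\pi^2}{\sqrt2}\,\frac{W}{\varepsilon},$$ and in particular $2\|X_x(s)\|+\|\dot X_x(s)P_x(s)\|\le 15\,W/\varepsilon$.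
   Context: Setting (construction of AdiaConvert). Let $\Sigma$ be finite, $\bar 0\notin\Sigma$, $n\ge1$, $\mathbb{X}\subseteq\Sigma^n$, and $\rho,\sigma$ the Gram matrices of unit vectors $|\rho_x\rangle,|\sigma_x\rangle\in\mathbb{C}^d$ ($x\in\mathbb X$). For $j\in[n]$, $(\Delta_j)_{x,y}=1-\delta_{x_j,y_j}$. Let $W=\mathrm{Adv}^\star(\rho,\sigma)$, where $\mathrm{Adv}^\star(\rho,\sigma)=\max_\Gamma\|\Gamma\circ(\rho-\sigma)\|$ over Hermitian $\Gamma$ with $\|\Gamma\circ\Delta_j\|\le1$ for all $j$ ($\circ$ = entrywise product); assume $W>0$. Fix $m$ and vectors $u_{x,i},v_{x,i}\in\mathbb{C}^m$ ($x\in\mathbb X$, $i\in[n]$) such that $\rho_{x,y}-\sigma_{x,y}=\sum_i(\Delta_i)_{x,y}\langle u_{x,i}|v_{y,i}\rangle$ for all $x,y$, and $\sum_i\|u_{x,i}\|^2\le W$, $\sum_i\|v_{x,i}\|^2\le W$ for all $x$. Hilbert space: $\mathcal H=\mathcal H_{\mathcal O}\oplus(\mathcal H_{\mathcal Q}\otimes\mathcal H_{\mathcal W})$ (orthogonal direct sum) with $\mathcal H_{\mathcal O}=\mathbb{C}^2\otimes\mathbb{C}^d$, $\mathcal H_{\mathcal Q}=\mathbb{C}^n\otimes\mathbb{C}^{\Sigma\cup\{\bar0\}}$ (orthonormal basis $|i,y\rangle$), $\mathcal H_{\mathcal W}=\mathbb{C}^m$. For $y\in\Sigma$, $|y^\pm\rangle=\frac1{\sqrt2}(|\bar0\rangle\pm|y\rangle)$.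 Let $\theta(s)=\frac{\pi}{2}s$, $\xi(s)=2\cos\theta(s)\sin\theta(s)$, $|k_x^+(s)\rangle=\cos\theta(s)|0,\rho_x\rangle+\sin\theta(s)|1,\sigma_x\rangle$, $|k_x^-(s)\rangle=-\sin\theta(s)|0,\rho_x\rangle+\cos\theta(s)|1,\sigma_x\rangle$ (in $\mathcal H_{\mathcal O}$), $|\Psi_x^+(s,\varepsilon)\rangle=|k_x^+(s)\rangle+\frac{\varepsilon}{\sqrt W}\sum_i|i,x_i^+\rangle|u_{x,i}\rangle$, $|\Psi_x^-(s,\varepsilon)\rangle=|k_x^-(s)\rangle+\xi(s)\frac{\sqrt W}{\varepsilon}\sum_i|i,x_i^-\rangle|v_{x,i}\rangle$, $|\psi_x^+(s,\varepsilon)\rangle=|\Psi_x^+(s,\varepsilon)\rangle/\|\,|\Psi_x^+(s,\varepsilon)\rangle\|$. $\Lambda(s,\varepsilon)$ is the orthogonal projection onto $\mathrm{span}\{|\Psi_x^-(s,\varepsilon)\rangle: x\in\mathbb X\}$; $\Pi_x=\sum_i|i,x_i^-\rangle\langle i,x_i^-|\otimes I_{\mathcal W}$, acting as $0$ on $\mathcal H_{\mathcal O}$; $H_x(s,\varepsilon)=\Lambda(s,\varepsilon)-\Pi_x$. $\|\cdot\|$ on operators is the operator norm. *)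

theory Defs
  imports "HOL-Analysis.Analysis"
begin

text \<open>Finite-dimensional complex Hilbert spaces are modelled as complex^'t for a finite
  index type 't (Euclidean L2 norm); operators as matrices complex^'t^'t acting by (*v).\<close>

definition cinner :: "complex^'t \<Rightarrow> complex^'t \<Rightarrow> complex" where
  "cinner a b = (\<Sum>i\<in>UNIV. cnj (a$i) * b$i)"

definition opnorm :: "complex^'t^'s \<Rightarrow> real" where
  "opnorm M = onorm (\<lambda>v. M *v v)"

definition outer :: "complex^'t \<Rightarrow> complex^'s \<Rightarrow> complex^'s^'t" where
  "outer a b = (\<chi> i j. a$i * cnj (b$j))"

definition hadamard :: "complex^'t^'s \<Rightarrow> complex^'t^'s \<Rightarrow> complex^'t^'s" where
  "hadamard A B = (\<chi> i j. A$i$j * B$i$j)"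

definition hermitian_mat :: "complex^'t^'t \<Rightarrow> bool" where
  "hermitian_mat A \<longleftrightarrow> (\<forall>i j. A$i$j = cnj (A$j$i))"

definition ket :: "'t \<Rightarrow> complex^'t" where
  "ket j = (\<chi> i. if i = j then 1 else 0)"

definition orth_proj :: "(complex^'t) set \<Rightarrow> complex^'t^'t" where
  "orth_proj S = (THE P. \<forall>v. P *v v \<in> vec.span S \<and>
                        (\<forall>w\<in>vec.span S. cinner w (v - P *v v) = 0))"

text \<open>Strings x \<in> \<Sigma>^n are functions 'n \<Rightarrow> 'a. Matrices indexed by \<XX> are matrices over the
  whole (finite) type 'n \<Rightarrow> 'a, with entries outside \<XX> \<times> \<XX> set to 0.\<close>

definition gram :: "('n::finite \<Rightarrow> 'a::finite) set \<Rightarrow> (('n \<Rightarrow> 'a) \<Rightarrow> complex^'d) \<Rightarrow> complex^('n\<Rightarrow>'a)^('n\<Rightarrow>'a)" where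
  "gram XX f = (\<chi> x y. if x \<in> XX \<and> y \<in> XX then cinner (f x) (f y) else 0)"

definition Delta :: "'n \<Rightarrow> complex^('n::finite\<Rightarrow>'a::finite)^('n\<Rightarrow>'a)" where
  "Delta j = (\<chi> x y. if x j = y j then 0 else 1)"

definition adv_star :: "('n::finite \<Rightarrow> 'a::finite) set \<Rightarrow> complex^('n\<Rightarrow>'a)^('n\<Rightarrow>'a) \<Rightarrow> complex^('n\<Rightarrow>'a)^('n\<Rightarrow>'a) \<Rightarrow> real" where
  "adv_star XX rho sigm = Sup {opnorm (hadamard G (rho - sigm)) | G.
      hermitian_mat G \<and> (\<forall>x y. (x \<notin> XX \<or> y \<notin> XX) \<longrightarrow> G$x$y = 0) \<and>
      (\<forall>j. opnorm (hadamard G (Delta j)) \<le> 1)}"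

text \<open>Hilbert space H = H_O \<oplus> (H_Q \<otimes> H_W): index type
  (bool \<times> 'd) + ('n \<times> 'a option \<times> 'm); False/True encode |0>,|1>, None encodes \<bar>0.\<close>

type_synonym ('n,'a,'d,'m) hidx = "(bool \<times> 'd) + ('n \<times> 'a option \<times> 'm)"

definition embO :: "bool \<Rightarrow> complex^'d \<Rightarrow> complex^('n::finite,'a::finite,'d::finite,'m::finite) hidx" where
  "embO b phi = (\<chi> idx. case idx of Inl (c,k) \<Rightarrow> (if c = b then phi$k else 0) | Inr _ \<Rightarrow> 0)"

definition embQW :: "'n \<Rightarrow> complex^('a option) \<Rightarrow> complex^'m \<Rightarrow> complex^('n::finite,'a::finite,'d::finite,'m::finite) hidx" where
  "embQW i a w = (\<chi> idx. case idx of Inl _ \<Rightarrow> 0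
       | Inr (j,z,l) \<Rightarrow> (if j = i then a$z * w$l else 0))"

definition y_plus :: "'a::finite \<Rightarrow> complex^('a option)" where
  "y_plus y = (1 / sqrt 2) *\<^sub>R (ket None + ket (Some y))"

definition y_minus :: "'a::finite \<Rightarrow> complex^('a option)" where
  "y_minus y = (1 / sqrt 2) *\<^sub>R (ket None - ket (Some y))"

definition theta :: "real \<Rightarrow> real" where "theta s = pi / 2 * s"

definition xi :: "real \<Rightarrow> real" where "xi s = 2 * cos (theta s) * sin (theta s)"

definition k_plus :: "(('n\<Rightarrow>'a) \<Rightarrow> complex^'d) \<Rightarrow> (('n\<Rightarrow>'a) \<Rightarrow> complex^'d) \<Rightarrow> real \<Rightarrow> ('n\<Rightarrow>'a)
     \<Rightarrow> complex^('n::finite,'a::finite,'d::finite,'m::finite) hidx" where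
  "k_plus rv sv s x = cos (theta s) *\<^sub>R embO False (rv x) + sin (theta s) *\<^sub>R embO True (sv x)"

definition k_minus :: "(('n\<Rightarrow>'a) \<Rightarrow> complex^'d) \<Rightarrow> (('n\<Rightarrow>'a) \<Rightarrow> complex^'d) \<Rightarrow> real \<Rightarrow> ('n\<Rightarrow>'a)
     \<Rightarrow> complex^('n::finite,'a::finite,'d::finite,'m::finite) hidx" where
  "k_minus rv sv s x = - sin (theta s) *\<^sub>R embO False (rv x) + cos (theta s) *\<^sub>R embO True (sv x)"

definition Psi_plus :: "(('n\<Rightarrow>'a) \<Rightarrow> complex^'d) \<Rightarrow> (('n\<Rightarrow>'a) \<Rightarrow> complex^'d)
     \<Rightarrow> (('n\<Rightarrow>'a) \<Rightarrow> 'n \<Rightarrow> complex^'m) \<Rightarrow> real \<Rightarrow> real \<Rightarrow> real \<Rightarrow> ('n\<Rightarrow>'a)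
     \<Rightarrow> complex^('n::finite,'a::finite,'d::finite,'m::finite) hidx" where
  "Psi_plus rv sv u W s eps x = k_plus rv sv s x
     + (eps / sqrt W) *\<^sub>R (\<Sum>i\<in>UNIV. embQW i (y_plus (x i)) (u x i))"

definition Psi_minus :: "(('n\<Rightarrow>'a) \<Rightarrow> complex^'d) \<Rightarrow> (('n\<Rightarrow>'a) \<Rightarrow> complex^'d)
     \<Rightarrow> (('n\<Rightarrow>'a) \<Rightarrow> 'n \<Rightarrow> complex^'m) \<Rightarrow> real \<Rightarrow> real \<Rightarrow> real \<Rightarrow> ('n\<Rightarrow>'a)
     \<Rightarrow> complex^('n::finite,'a::finite,'d::finite,'m::finite) hidx" where
  "Psi_minus rv sv v W s eps x = k_minus rv sv s x
     + (xi s * sqrt W / eps) *\<^sub>R (\<Sum>i\<in>UNIV. embQW i (y_minus (x i)) (v x i))"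

definition psi_plus where
  "psi_plus rv sv u W s eps x =
     (1 / norm (Psi_plus rv sv u W s eps x)) *\<^sub>R Psi_plus rv sv u W s eps x"

definition Lambda :: "('n \<Rightarrow> 'a) set \<Rightarrow> (('n\<Rightarrow>'a) \<Rightarrow> complex^'d) \<Rightarrow> (('n\<Rightarrow>'a) \<Rightarrow> complex^'d)
     \<Rightarrow> (('n\<Rightarrow>'a) \<Rightarrow> 'n \<Rightarrow> complex^'m) \<Rightarrow> real \<Rightarrow> real \<Rightarrow> real
     \<Rightarrow> complex^('n::finite,'a::finite,'d::finite,'m::finite) hidx^('n,'a,'d,'m) hidx" where
  "Lambda XX rv sv v W s eps = orth_proj ((\<lambda>x. Psi_minus rv sv v W s eps x) ` XX)"

definition Pi_x :: "('n \<Rightarrow> 'a) \<Rightarrow> complex^('n::finite,'a::finite,'d::finite,'m::finite) hidx^('n,'a,'d,'m) hidx" where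
  "Pi_x x = (\<Sum>i\<in>UNIV. \<Sum>l\<in>UNIV.
      outer (embQW i (y_minus (x i)) (ket l)) (embQW i (y_minus (x i)) (ket l)))"

definition H_x where
  "H_x XX rv sv v W s eps x = Lambda XX rv sv v W s eps - Pi_x x"

end

theory Submission
  imports Defs
begin


lemma sum_UNIV_sum_type:
  "(\<Sum>i\<in>(UNIV::('a::finite+'b::finite) set). f i) = (\<Sum>i\<in>UNIV. f (Inl i)) + (\<Sum>i\<in>UNIV. f (Inr i))"
proof -
  have u: "(UNIV::('a+'b) set) = range Inl \<union> range Inr" by (auto, case_tac x, auto)
  have "sum f (range Inl \<union> range Inr) = sum f (range Inl) + sum f (range Inr)"
    by (rule sum.union_disjoint) auto
  then have "sum f UNIV = sum f (range Inl) + sum f (range Inr)"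
    by (simp only: u[symmetric])
  then show ?thesis
    by (simp add: sum.reindex)
qed

lemma cinner_add_right: "cinner a (b + c) = cinner a b + cinner a c"
  by (simp add: cinner_def sum.distrib distrib_left)
lemma cinner_add_left: "cinner (a + b) c = cinner a c + cinner b c"
  by (simp add: cinner_def sum.distrib distrib_right)
lemma cinner_diff_right: "cinner a (b - c) = cinner a b - cinner a c"
  by (simp add: cinner_def sum_subtractf right_diff_distrib)
lemma cinner_diff_left: "cinner (a - b) c = cinner a c - cinner b c"
  by (simp add: cinner_def sum_subtractf left_diff_distrib)
lemma cinner_minus_right: "cinner a (- b) = - cinner a b"
  by (simp add: cinner_def sum_negf)
lemma cinner_minus_left: "cinner (- a) b = - cinner a b"
  by (simp add: cinner_def sum_negf)
lemma cinner_scaleR_right: "cinner a (r *\<^sub>R b) = of_real r * cinner a b"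
  unfolding cinner_def sum_distrib_left
  by (intro sum.cong refl) (simp only: vector_scaleR_component, simp add: scaleR_conv_of_real algebra_simps)
lemma cinner_scaleR_left: "cinner (r *\<^sub>R a) b = of_real r * cinner a b"
  unfolding cinner_def sum_distrib_left
  by (intro sum.cong refl) (simp only: vector_scaleR_component, simp add: scaleR_conv_of_real algebra_simps)
lemma cinner_scaleC_right: "cinner a (c *s b) = c * cinner a b"
  by (simp add: cinner_def sum_distrib_left algebra_simps)
lemma cinner_scaleC_left: "cinner (c *s a) b = cnj c * cinner a b"
  by (simp add: cinner_def sum_distrib_left algebra_simps)
lemma cinner_sum_right: "cinner a (\<Sum>i\<in>A. f i) = (\<Sum>i\<in>A. cinner a (f i))"
  by (simp add: cinner_def sum_component sum_distrib_left sum.swap[of _ A])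
lemma cinner_sum_left: "cinner (\<Sum>i\<in>A. f i) b = (\<Sum>i\<in>A. cinner (f i) b)"
  by (simp add: cinner_def sum_component sum_distrib_right sum.swap[of _ A])
lemma cinner_zero_right[simp]: "cinner a 0 = 0" by (simp add: cinner_def)
lemma cinner_zero_left[simp]: "cinner 0 a = 0" by (simp add: cinner_def)
lemma cinner_cnj: "cnj (cinner a b) = cinner b a"
  by (simp add: cinner_def mult.commute)

lemma cinner_self: "cinner a a = of_real ((norm a)\<^sup>2)"
proof -
  have "cinner a a = (\<Sum>i\<in>UNIV. of_real ((cmod (a$i))\<^sup>2))"
    unfolding cinner_def
    by (intro sum.cong refl) (simp add: complex_norm_square mult.commute del: of_real_power)
  also have "\<dots> = of_real ((norm a)\<^sup>2)"
  proof -
    have "(norm a)\<^sup>2 = (\<Sum>i\<in>UNIV. (cmod (a$i))\<^sup>2)"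
      by (simp add: norm_vec_def L2_set_def sum_nonneg)
    then show ?thesis by simp
  qed
  finally show ?thesis .
qed

lemma inner_Re_cinner: "inner a b = Re (cinner a b)"
  by (simp add: inner_vec_def cinner_def inner_complex_def)

lemma norm_scaleC: "norm (c *s a) = cmod c * norm a"
  by (simp add: norm_vec_def L2_set_right_distrib norm_mult)

lemma cinner_CS: "cmod (cinner a b) \<le> norm a * norm b"
proof (cases "cinner a b = 0")
  case True then show ?thesis by simp
next
  case False
  define c where "c = cinner a b"
  define z where "z = c / of_real (cmod c)"
  have cz: "cmod z = 1" using False by (simp add: z_def c_def norm_divide)
  have "cinner (z *s a) b = cnj z * c" by (simp add: cinner_scaleC_left c_def)
  also have "\<dots> = of_real (cmod c)"
    using False by (simp add: z_def c_def complex_norm_square[symmetric] power2_eq_square field_simps)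
  finally have e: "cinner (z *s a) b = of_real (cmod c)" .
  have "cmod c = inner (z *s a) b" by (simp add: inner_Re_cinner e)
  also have "\<dots> \<le> norm (z *s a) * norm b" by (rule norm_cauchy_schwarz)
  also have "\<dots> = norm a * norm b" by (simp add: norm_scaleC cz)
  finally show ?thesis by (simp add: c_def)
qed

lemma cinner_self_zero: "cinner a a = 0 \<Longrightarrow> a = 0"
  by (simp add: cinner_self)


lemma sum_prod_UNIV: "(\<Sum>i\<in>(UNIV::('a::finite\<times>'b::finite) set). f i) = (\<Sum>a\<in>UNIV. \<Sum>b\<in>UNIV. f (a,b))"
  unfolding sum.cartesian_product UNIV_Times_UNIV by (rule sum.cong) auto

lemma embO_Inl[simp]: "embO b phi $ Inl (c,k) = (if c = b then phi$k else 0)"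
  by (simp add: embO_def)
lemma embO_Inr[simp]: "embO b phi $ Inr p = 0"
  by (simp add: embO_def)
lemma embQW_Inl[simp]: "embQW i a w $ Inl p = 0"
  by (simp add: embQW_def)
lemma embQW_Inr[simp]: "embQW i a w $ Inr (j,z,l) = (if j = i then a$z * w$l else 0)"
  by (simp add: embQW_def)

lemma cinner_embO_embO[simp]: "cinner (embO b phi) (embO c psi) = (if b = c then cinner phi psi else 0)"
  by (cases b; cases c) (simp_all add: cinner_def sum_UNIV_sum_type sum_prod_UNIV UNIV_bool)

lemma cinner_embO_embQW[simp]: "cinner (embO b phi) (embQW i a w) = 0"
  by (simp add: cinner_def sum_UNIV_sum_type)
lemma cinner_embQW_embO[simp]: "cinner (embQW i a w) (embO b phi) = 0"
  by (simp add: cinner_def sum_UNIV_sum_type)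

lemma cinner_embQW_embQW[simp]:
  "cinner (embQW i a w :: complex^('n::finite,'a::finite,'d::finite,'m::finite) hidx) (embQW j b z) = (if i = j then cinner a b * cinner w z else 0)"
proof -
  have "cinner (embQW i a w :: complex^('n,'a,'d,'m) hidx) (embQW j b z) =
     (\<Sum>k\<in>UNIV. \<Sum>zz\<in>UNIV. \<Sum>l\<in>UNIV. cnj ((embQW i a w :: complex^('n,'a,'d,'m) hidx) $ Inr (k,zz,l)) * (embQW j b z :: complex^('n,'a,'d,'m) hidx) $ Inr (k,zz,l))"
    by (simp add: cinner_def sum_UNIV_sum_type sum_prod_UNIV)
  also have "\<dots> = (\<Sum>k\<in>UNIV. if k = i \<and> k = j then (\<Sum>zz\<in>UNIV. \<Sum>l\<in>UNIV. cnj (a$zz * w$l) * (b$zz * z$l)) else 0)"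
    apply (intro sum.cong refl)
    subgoal for k by (cases "k = i"; cases "k = j"; simp)
    done
  also have "\<dots> = (if i = j then (\<Sum>zz\<in>UNIV. \<Sum>l\<in>UNIV. cnj (a$zz * w$l) * (b$zz * z$l)) else 0)"
    by (cases "i = j") (auto simp: sum.delta' intro!: sum.neutral)
  also have "(\<Sum>zz\<in>UNIV. \<Sum>l\<in>UNIV. cnj (a$zz * w$l) * (b$zz * z$l)) = cinner a b * cinner w z"
    by (simp add: cinner_def sum_product mult_ac) (rule sum.swap)
  finally show ?thesis by simp
qed

lemma mult_if_10[simp]: "x * (if c then 1 else 0) = (if c then x else (0::'b::semiring_1))"
  "(if c then 1 else 0) * x = (if c then x else 0)"
  by simp_all

lemma cinner_ket[simp]: "cinner (ket p) (ket q) = (if p = q then 1 else 0)"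
proof -
  have "cinner (ket p) (ket q) = (\<Sum>i\<in>UNIV. if i = q then (if p = q then 1 else 0) else 0)"
    unfolding cinner_def by (intro sum.cong refl) (auto simp: ket_def)
  then show ?thesis by simp
qed

lemma sqrt2_sq_c[simp]: "complex_of_real (sqrt 2) * complex_of_real (sqrt 2) = 2"
  by (simp flip: of_real_mult)

lemma half_sqrt: "complex_of_real (1 / sqrt 2) * complex_of_real (1 / sqrt 2) = 1/2"
  by (simp flip: of_real_mult)

lemma cinner_yp_ym: "cinner (y_plus y) (y_minus z) = (if y = z then 0 else 1/2)"
  by (simp add: y_plus_def y_minus_def cinner_scaleR_left cinner_scaleR_right cinner_add_left
      cinner_add_right cinner_diff_right half_sqrt mult.assoc[symmetric])
lemma cinner_ym_yp: "cinner (y_minus y) (y_plus y) = 0"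
  by (simp add: y_plus_def y_minus_def cinner_scaleR_left cinner_scaleR_right cinner_add_left
      cinner_add_right cinner_diff_left half_sqrt mult.assoc[symmetric])
lemma cinner_ym_ym: "cinner (y_minus y) (y_minus y) = 1"
  by (simp add: y_plus_def y_minus_def cinner_scaleR_left cinner_scaleR_right cinner_diff_left
      cinner_diff_right half_sqrt mult.assoc[symmetric])
lemma cinner_yp_yp: "cinner (y_plus y) (y_plus y) = 1"
  by (simp add: y_plus_def y_minus_def cinner_scaleR_left cinner_scaleR_right cinner_add_left
      cinner_add_right half_sqrt mult.assoc[symmetric])


lemma mult_ket_component[simp]: "(M *v ket j) $ i = M $ i $ j"
  by (simp add: matrix_vector_mult_def ket_def cong: if_cong)

lemma vec_ket_expand: "v = (\<Sum>j\<in>UNIV. v$j *s ket j)"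
  by (simp add: vec_eq_iff sum_component ket_def cong: if_cong)

lemma scaleR_as_scaleC: "r *\<^sub>R (x::complex^'t) = complex_of_real r *s x"
  unfolding vec_eq_iff by (simp only: vector_scaleR_component vector_smult_component) (simp add: scaleR_conv_of_real)

lemma orth_proj_ex:
  fixes S :: "(complex^'t::finite) set"
  shows "\<exists>!P. \<forall>v. P *v v \<in> vec.span S \<and> (\<forall>w\<in>vec.span S. cinner w (v - P *v v) = 0)"
proof -
  let ?T = "vec.span S"
  have rsub: "subspace ?T"
    unfolding subspace_def
    by (auto simp: vec.span_zero vec.span_add scaleR_as_scaleC intro: vec.span_scale)
  then have spT: "span ?T = ?T" by simp
  have "\<exists>y. y \<in> ?T \<and> (\<forall>w\<in>?T. cinner w (ket j - y) = 0)" for j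
  proof -
    obtain y z where y: "y \<in> span ?T" and z: "\<And>w. w \<in> span ?T \<Longrightarrow> orthogonal z w"
      and e: "ket j = y + z"
      using orthogonal_subspace_decomp_exists[of ?T "ket j"] by blast
    have "cinner w z = 0" if w: "w \<in> ?T" for w
    proof -
      have "inner z w = 0" using z[of w] w spT by (simp add: orthogonal_def)
      then have 1: "Re (cinner z w) = 0" by (simp add: inner_Re_cinner)
      have "\<i> *s w \<in> ?T" using w by (rule vec.span_scale)
      then have "inner z (\<i> *s w) = 0" using z spT by (simp add: orthogonal_def)
      then have 2: "Im (cinner z w) = 0" by (simp add: inner_Re_cinner cinner_scaleC_right)
      from 1 2 have "cinner z w = 0" by (simp add: complex_eq_iff)
      then show ?thesis by (metis cinner_cnj complex_cnj_zero)
    qed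
    moreover have "z = ket j - y" using e by simp
    ultimately show ?thesis using y spT by auto
  qed
  then obtain Y where Y: "\<And>j. Y j \<in> ?T" "\<And>j w. w \<in> ?T \<Longrightarrow> cinner w (ket j - Y j) = 0"
    by metis
  define P where "P = (\<chi> i j. Y j $ i)"
  have Pv: "P *v v = (\<Sum>j\<in>UNIV. v$j *s Y j)" for v
    by (simp add: vec_eq_iff P_def matrix_vector_mult_def sum_component mult.commute)
  have ex: "\<forall>v. P *v v \<in> ?T \<and> (\<forall>w\<in>?T. cinner w (v - P *v v) = 0)"
  proof (intro allI conjI ballI)
    fix v
    show "P *v v \<in> ?T" unfolding Pv by (intro vec.span_sum vec.span_scale Y)
    fix w assume w: "w \<in> ?T"
    have "v - P *v v = (\<Sum>j\<in>UNIV. v$j *s (ket j - Y j))"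
      apply (subst (1) vec_ket_expand[of v])
      by (simp add: Pv vector_ssub_ldistrib sum_subtractf)
    moreover have "cinner w (ket j) = cinner w (Y j)" for j
      using Y(2)[OF w, of j] by (simp add: cinner_diff_right)
    ultimately show "cinner w (v - P *v v) = 0"
      by (simp add: cinner_sum_right cinner_scaleC_right cinner_diff_right)
  qed
  have uniq: "P1 = P2" if h1: "\<forall>v. P1 *v v \<in> ?T \<and> (\<forall>w\<in>?T. cinner w (v - P1 *v v) = 0)"
    and h2: "\<forall>v. P2 *v v \<in> ?T \<and> (\<forall>w\<in>?T. cinner w (v - P2 *v v) = 0)" for P1 P2 :: "complex^'t^'t"
  proof -
    have "P1 *v v = P2 *v v" for v
    proof -
      let ?d = "P1 *v v - P2 *v v"
      have d: "?d \<in> ?T" using h1 h2 by (simp add: vec.span_diff)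
      have "cinner ?d (v - P2 *v v) - cinner ?d (v - P1 *v v) = 0" using h1 h2 d by simp
      then have "cinner ?d ?d = 0" by (simp add: cinner_diff_right)
      then have "?d = 0" by (rule cinner_self_zero)
      then show ?thesis by simp
    qed
    then have "(P1 *v ket j) $ i = (P2 *v ket j) $ i" for i j by simp
    then show ?thesis by (simp add: vec_eq_iff)
  qed
  show ?thesis using ex uniq by blast
qed

lemma orth_proj_props:
  "orth_proj S *v v \<in> vec.span S"
  "w \<in> vec.span S \<Longrightarrow> cinner w (v - orth_proj S *v v) = 0"
  using theI'[OF orth_proj_ex[of S]] unfolding orth_proj_def by auto

lemma orth_proj_fix: "a \<in> vec.span S \<Longrightarrow> orth_proj S *v a = a"
proof -
  assume a: "a \<in> vec.span S"
  let ?d = "a - orth_proj S *v a"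
  have "?d \<in> vec.span S" using a orth_proj_props(1)[of S a] by (simp add: vec.span_diff)
  then have "cinner ?d ?d = 0" by (rule orth_proj_props(2))
  then have "?d = 0" by (rule cinner_self_zero)
  then show ?thesis by simp
qed

lemma orth_proj_perp: "(\<forall>b\<in>S. cinner p b = 0) \<Longrightarrow> cinner p (orth_proj S *v w) = 0"
proof -
  assume h: "\<forall>b\<in>S. cinner p b = 0"
  have sub: "vec.subspace {b. cinner p b = 0}"
      by (auto simp: vec.subspace_def cinner_add_right cinner_scaleC_right)
  have "orth_proj S *v w \<in> {b. cinner p b = 0}"
    by (rule vec.span_subspace_induct[OF orth_proj_props(1) sub]) (use h in auto)
  then show ?thesis by simp
qed




definition Qp :: "('n::finite \<Rightarrow> 'a::finite) \<Rightarrow> ('n \<Rightarrow> complex^'m::finite) \<Rightarrow> complex^('n,'a,'d::finite,'m) hidx" where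
  "Qp x p = (\<Sum>i\<in>UNIV. embQW i (y_plus (x i)) (p i))"
definition Rm :: "('n::finite \<Rightarrow> 'a::finite) \<Rightarrow> ('n \<Rightarrow> complex^'m::finite) \<Rightarrow> complex^('n,'a,'d::finite,'m) hidx" where
  "Rm x q = (\<Sum>i\<in>UNIV. embQW i (y_minus (x i)) (q i))"

lemma cinner_embO_Qp[simp]: "cinner (embO b phi) (Qp x p) = 0" "cinner (Qp x p) (embO b phi) = 0"
  by (simp_all add: Qp_def cinner_sum_right cinner_sum_left)
lemma cinner_embO_Rm[simp]: "cinner (embO b phi) (Rm x p) = 0" "cinner (Rm x p) (embO b phi) = 0"
  by (simp_all add: Rm_def cinner_sum_right cinner_sum_left)

lemma cinner_Qp_Qp[simp]: "cinner (Qp x p) (Qp x p') = (\<Sum>i\<in>UNIV. cinner (p i) (p' i))"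
  by (simp add: Qp_def cinner_sum_right cinner_sum_left cinner_yp_yp if_distrib sum.delta cong: if_cong)
lemma cinner_Rm_Rm[simp]: "cinner (Rm x p) (Rm x p') = (\<Sum>i\<in>UNIV. cinner (p i) (p' i))"
  by (simp add: Rm_def cinner_sum_right cinner_sum_left cinner_ym_ym if_distrib sum.delta cong: if_cong)
lemma cinner_Rm_Qp[simp]: "cinner (Rm x q) (Qp x p) = 0"
  by (simp add: Rm_def Qp_def cinner_sum_right cinner_sum_left cinner_ym_yp)
lemma cinner_Qp_Rm_same[simp]: "cinner (Qp x p) (Rm x q) = 0"
  by (simp add: Rm_def Qp_def cinner_sum_right cinner_sum_left cinner_yp_ym)
lemma cinner_Qp_Rm: "cinner (Qp x p) (Rm y q) = (\<Sum>i\<in>UNIV. (if x i = y i then 0 else 1/2) * cinner (p i) (q i))"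
  by (simp add: Rm_def Qp_def cinner_sum_right cinner_sum_left cinner_yp_ym if_distrib sum.delta cong: if_cong)

lemma Psi_plus_eq: "Psi_plus rv sv u W s eps x =
   complex_of_real (cos (theta s)) *s embO False (rv x) + complex_of_real (sin (theta s)) *s embO True (sv x)
   + complex_of_real (eps / sqrt W) *s Qp x (u x)"
  by (simp add: Psi_plus_def k_plus_def Qp_def scaleR_as_scaleC)
lemma Psi_minus_eq: "Psi_minus rv sv v W s eps x =
   complex_of_real (- sin (theta s)) *s embO False (rv x) + complex_of_real (cos (theta s)) *s embO True (sv x)
   + complex_of_real (xi s * sqrt W / eps) *s Rm x (v x)"
  by (simp add: Psi_minus_def k_minus_def Rm_def scaleR_as_scaleC)


lemma outer_mult_vec: "outer a b *v w = cinner b w *s a"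
  by (simp add: vec_eq_iff outer_def matrix_vector_mult_def cinner_def sum_distrib_left mult_ac)

lemma matrix_outer_right: "M ** outer a b = outer (M *v a) b"
  by (simp add: vec_eq_iff outer_def matrix_matrix_mult_def matrix_vector_mult_def sum_distrib_left sum_distrib_right mult_ac)

lemma outer_matrix_left: "(outer a b ** M) $ i $ j = a $ i * cinner b (M *v ket j)"
  by (simp add: outer_def matrix_matrix_mult_def cinner_def sum_distrib_left mult_ac)

lemma outer_matrix_zero: "(\<And>j. cinner b (M *v ket j) = 0) \<Longrightarrow> outer a b ** M = 0"
  by (simp add: vec_eq_iff outer_matrix_left)

lemma outer_outer: "outer a b ** outer c d = outer (cinner b c *s a) d"
  by (simp add: matrix_outer_right outer_mult_vec)

lemma outer_scaleR_left: "outer (r *\<^sub>R a) b = r *\<^sub>R outer a b"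
  by (simp add: vec_eq_iff outer_def)
lemma outer_scaleR_right: "outer a (r *\<^sub>R b) = r *\<^sub>R outer a b"
  by (simp add: vec_eq_iff outer_def)
lemma outer_add_left: "outer (a + c) b = outer a b + outer c b"
  by (simp add: vec_eq_iff outer_def distrib_right)
lemma outer_add_right: "outer a (b + c) = outer a b + outer a c"
  by (simp add: vec_eq_iff outer_def distrib_left)
lemma outer_zero_left[simp]: "outer 0 b = 0"
  by (simp add: vec_eq_iff outer_def)

lemma matrix_scaleR_left: "(r *\<^sub>R A) ** B = r *\<^sub>R (A ** (B::complex^'k^'m))"
  by (simp add: vec_eq_iff matrix_matrix_mult_def scaleR_sum_right)

lemma opnorm_outer: "opnorm (outer a b) \<le> norm a * norm b"
  unfolding opnorm_def
proof (rule onorm_le)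
  fix w
  have "norm (outer a b *v w) = cmod (cinner b w) * norm a"
    by (simp add: outer_mult_vec norm_scaleC)
  also have "\<dots> \<le> (norm b * norm w) * norm a"
    by (intro mult_right_mono cinner_CS) simp
  finally show "norm (outer a b *v w) \<le> norm a * norm b * norm w" by (simp add: mult_ac)
qed

lemma matrix_sum_mult_vec: "(sum f A) *v w = (\<Sum>k\<in>A. f k *v w)"
  by (simp add: vec_eq_iff matrix_vector_mult_def sum_component sum_distrib_right sum.swap[of _ UNIV A])

lemma cinner_ket_left: "cinner (ket l) z = z $ l"
proof -
  have "cinner (ket l) z = (\<Sum>i\<in>UNIV. if i = l then z$i else 0)"
    unfolding cinner_def by (intro sum.cong refl) (simp add: ket_def)
  then show ?thesis by simp
qed

lemma mult_if_0: "x * (if c then y else 0) = (if c then x * y else (0::'b::mult_zero))"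
  by simp

lemma embQW_ket_expand:
  fixes z :: "complex^'m::finite" and a :: "complex^'a::finite option" and i :: "'n::finite"
  shows "(\<Sum>l\<in>UNIV. z$l *s embQW i a (ket l)) = (embQW i a z :: complex^('n,'a,'d::finite,'m) hidx)"
proof (rule vec_eq_iff[THEN iffD2], rule allI)
  fix idx :: "('n,'a,'d,'m) hidx"
  show "(\<Sum>l\<in>UNIV. z$l *s embQW i a (ket l)) $ idx = (embQW i a z :: complex^('n,'a,'d,'m) hidx) $ idx"
  proof (cases idx)
    case (Inl p) then show ?thesis by (simp add: sum_component)
  next
    case (Inr p)
    obtain j zz l' where p: "p = (j,zz,l')" by (cases p) auto
    show ?thesis
      by (cases "j = i") (simp_all add: Inr p sum_component ket_def mult_if_0 mult.commute)
  qed
qed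

definition eil :: "('n::finite \<Rightarrow> 'a::finite) \<Rightarrow> 'n \<Rightarrow> 'm::finite \<Rightarrow> complex^('n,'a,'d::finite,'m) hidx" where
  "eil x i l = embQW i (y_minus (x i)) (ket l)"

lemma Pi_x_mult: "Pi_x x *v w = (\<Sum>i\<in>UNIV. \<Sum>l\<in>UNIV. cinner (eil x i l) w *s eil x i l)"
  by (simp add: Pi_x_def eil_def matrix_sum_mult_vec outer_mult_vec)

lemma Pi_x_embO: "Pi_x x *v embO b phi = 0"
  by (simp add: Pi_x_mult eil_def)

lemma Pi_x_Rm: "Pi_x x *v Rm x q = Rm x q"
proof -
  have ci: "cinner (eil x i l) (Rm x q) = q i $ l" for i l
    by (simp add: eil_def Rm_def cinner_sum_right cinner_ym_ym cinner_ket_left if_distrib cong: if_cong)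
  have "Pi_x x *v Rm x q = (\<Sum>i\<in>UNIV. \<Sum>l\<in>UNIV. q i $ l *s eil x i l)"
    unfolding Pi_x_mult ci by (rule refl)
  also have "\<dots> = Rm x q"
    unfolding eil_def embQW_ket_expand Rm_def ..
  finally show ?thesis .
qed

lemma cinner_perp_Pi: "cinner (embO False a + embO True b + Qp x p) (Pi_x x *v w) = 0"
proof -
  have "cinner (embO False a + embO True b + Qp x p) (eil x i l) = 0" for i l
    by (simp add: eil_def Qp_def cinner_add_left cinner_sum_left cinner_yp_ym)
  then show ?thesis
    by (simp add: Pi_x_mult cinner_sum_right cinner_scaleC_right)
qed



lemma bounded_bilinear_outer: "bounded_bilinear (outer :: complex^'s::finite \<Rightarrow> complex^'t::finite \<Rightarrow> _)"
proof -
  have "bilinear (outer :: complex^'s::finite \<Rightarrow> complex^'t::finite \<Rightarrow> _)"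
    unfolding bilinear_def
    by (auto intro!: linearI simp: outer_add_left outer_add_right outer_scaleR_left outer_scaleR_right)
  then show ?thesis by (simp add: bilinear_conv_bounded_bilinear)
qed

lemma cinner_gen:
  "cinner (a1 *s embO False r + b1 *s embO True t + g1 *s Qp x p1 + h1 *s Rm x q1)
          (a2 *s embO False r + b2 *s embO True t + g2 *s Qp x p2 + h2 *s Rm x q2)
   = cnj a1 * a2 * cinner r r + cnj b1 * b2 * cinner t t
     + cnj g1 * g2 * (\<Sum>i\<in>UNIV. cinner (p1 i) (p2 i)) + cnj h1 * h2 * (\<Sum>i\<in>UNIV. cinner (q1 i) (q2 i))"
  by (simp add: cinner_add_left cinner_add_right cinner_scaleC_left cinner_scaleC_right)

lemma deriv3:
  assumes "(f has_field_derivative f') (at s)" "(g has_field_derivative g') (at s)" "(h has_field_derivative h') (at s)"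
  shows "((\<lambda>s. f s *\<^sub>R A + g s *\<^sub>R B + h s *\<^sub>R C) has_vector_derivative (f' *\<^sub>R A + g' *\<^sub>R B + h' *\<^sub>R C)) (at s)"
  apply (rule has_vector_derivative_eq_rhs)
   apply (rule has_vector_derivative_add has_vector_derivative_scaleR has_vector_derivative_const assms)+
  apply simp
  done

lemma Psi_plus_deriv:
  "((\<lambda>s. Psi_plus rv sv u W s eps x) has_vector_derivative (pi/2) *\<^sub>R k_minus rv sv s x) (at s)"
proof -
  have "((\<lambda>s. Psi_plus rv sv u W s eps x) has_vector_derivative
     (- sin (pi / 2 * s) * (pi/2)) *\<^sub>R embO False (rv x) + (cos (pi / 2 * s) * (pi/2)) *\<^sub>R embO True (sv x)
     + 0 *\<^sub>R (\<Sum>i\<in>UNIV. embQW i (y_plus (x i)) (u x i))) (at s)"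
    unfolding Psi_plus_def k_plus_def theta_def
    by (rule deriv3) (auto intro!: derivative_eq_intros)
  then show ?thesis
    by (rule has_vector_derivative_eq_rhs) (simp add: k_minus_def theta_def algebra_simps)
qed

lemma Psi_minus_deriv:
  assumes "eps \<noteq> 0"
  shows "((\<lambda>s. Psi_minus rv sv v W s eps x) has_vector_derivative
     (- (pi/2) *\<^sub>R k_plus rv sv s x + (pi * ((cos (theta s))\<^sup>2 - (sin (theta s))\<^sup>2) * sqrt W / eps) *\<^sub>R
        (\<Sum>i\<in>UNIV. embQW i (y_minus (x i)) (v x i)))) (at s)"
proof -
  have "((\<lambda>s. Psi_minus rv sv v W s eps x) has_vector_derivative
     (- cos (pi / 2 * s) * (pi/2)) *\<^sub>R embO False (rv x) + (- sin (pi / 2 * s) * (pi/2)) *\<^sub>R embO True (sv x)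
     + (pi * ((cos (pi / 2 * s))\<^sup>2 - (sin (pi / 2 * s))\<^sup>2) * sqrt W / eps) *\<^sub>R (\<Sum>i\<in>UNIV. embQW i (y_minus (x i)) (v x i))) (at s)"
    unfolding Psi_minus_def k_minus_def theta_def xi_def
    by (rule deriv3) (use assms in \<open>auto intro!: derivative_eq_intros simp: power2_eq_square field_simps\<close>)
  then show ?thesis
    by (rule has_vector_derivative_eq_rhs) (simp add: k_plus_def theta_def algebra_simps)
qed


lemma matrix_scaleR_right: "(A::complex^'k^'m) ** (r *\<^sub>R B) = r *\<^sub>R (A ** (B::complex^'n^'k))"
  by (simp add: vec_eq_iff matrix_matrix_mult_def scaleR_sum_right)

lemma matrix_add_rdistrib': "((B::complex^'k^'m) + C) ** (A::complex^'n^'k) = B ** A + C ** A"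
  by (simp add: vec_eq_iff matrix_matrix_mult_def sum.distrib distrib_right)

lemma matrix_vector_scaleC: "(A::complex^'k^'m) *v (c *s v) = c *s (A *v v)"
  by (simp add: vec_eq_iff matrix_vector_mult_def sum_distrib_left mult_ac)

lemma cinner_embO_Pi:
  fixes w :: "complex^('n::finite,'a::finite,'d::finite,'m::finite) hidx"
  shows "cinner (embO b r) (Pi_x x *v w) = 0"
proof -
  have "cinner (embO b r) (eil x i l :: complex^('n,'a,'d,'m) hidx) = 0" for i l by (simp add: eil_def)
  then show ?thesis by (simp add: Pi_x_mult cinner_sum_right cinner_scaleC_right)
qed

lemma cinner_Qp_Pi:
  fixes w :: "complex^('n::finite,'a::finite,'d::finite,'m::finite) hidx"
  shows "cinner (Qp x p) (Pi_x x *v w) = 0"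
proof -
  have "cinner (Qp x p) (eil x i l :: complex^('n,'a,'d,'m) hidx) = 0" for i l
    by (simp add: eil_def Qp_def cinner_sum_left cinner_yp_ym)
  then show ?thesis by (simp add: Pi_x_mult cinner_sum_right cinner_scaleC_right)
qed

lemma norm_sq_cinner: "(norm v)\<^sup>2 = Re (cinner v v)"
  by (simp add: cinner_self)

lemma numeric_bound: "pi * sqrt 5 + pi\<^sup>2 / sqrt 2 \<le> 15"
proof -
  have p: "pi \<le> 3.1416" using pi_approx by simp
  have s5: "sqrt 5 \<le> 2.2361"
  proof -
    have "sqrt 5 \<le> sqrt (2.2361\<^sup>2)" by (rule real_sqrt_le_mono) (simp add: power2_eq_square)
    then show ?thesis by simp
  qed
  have s2: "sqrt 2 \<le> 1.41422"
  proof -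
    have "sqrt 2 \<le> sqrt (1.41422\<^sup>2)" by (rule real_sqrt_le_mono) (simp add: power2_eq_square)
    then show ?thesis by simp
  qed
  have a: "pi * sqrt 5 \<le> 3.1416 * 2.2361" by (rule mult_mono) (use p s5 pi_gt3 in auto)
  have pp: "pi\<^sup>2 \<le> 3.1416\<^sup>2" using p pi_gt3 by (intro power_mono) auto
  have b: "pi\<^sup>2 * sqrt 2 \<le> 3.1416\<^sup>2 * 1.41422" by (rule mult_mono) (use pp s2 in auto)
  have "pi\<^sup>2 / sqrt 2 = pi\<^sup>2 * sqrt 2 / 2"
    by (simp add: field_simps)
  then show ?thesis using a b by (simp add: power2_eq_square)
qed



theorem mainTheorem10:
  fixes XX :: "('n::finite \<Rightarrow> 'a::finite) set"
    and rv sv :: "('n \<Rightarrow> 'a) \<Rightarrow> complex^'d::finite"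
    and u v :: "('n \<Rightarrow> 'a) \<Rightarrow> 'n \<Rightarrow> complex^'m::finite"
    and W eps :: real and x :: "'n \<Rightarrow> 'a"
  assumes unit_r: "\<forall>y\<in>XX. norm (rv y) = 1"
    and unit_s: "\<forall>y\<in>XX. norm (sv y) = 1"
    and W_def: "W = adv_star XX (gram XX rv) (gram XX sv)"
    and W_pos: "W > 0"
    and decomp: "\<forall>y\<in>XX. \<forall>z\<in>XX. gram XX rv $ y $ z - gram XX sv $ y $ z
                   = (\<Sum>i\<in>UNIV. Delta i $ y $ z * cinner (u y i) (v z i))"
    and u_bnd: "\<forall>y\<in>XX. (\<Sum>i\<in>UNIV. (norm (u y i))\<^sup>2) \<le> W"
    and v_bnd: "\<forall>y\<in>XX. (\<Sum>i\<in>UNIV. (norm (v y i))\<^sup>2) \<le> W"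
    and eps: "0 < eps" "eps \<le> 1"
    and x: "x \<in> XX"
  defines "P \<equiv> \<lambda>s. outer (psi_plus rv sv u W s eps x) (psi_plus rv sv u W s eps x)"
    and "X \<equiv> \<lambda>s. (pi / (2 * norm (Psi_plus rv sv u W s eps x))) *\<^sub>R
                   outer (Psi_minus rv sv v W s eps x) (psi_plus rv sv u W s eps x)"
    and "H \<equiv> \<lambda>s. H_x XX rv sv v W s eps x"
  shows "(\<forall>s\<in>{0..1}. H s ** X s - X s ** H s = H s ** X s
                  \<and> H s ** X s = vector_derivative P (at s) ** P s)
       \<and> (W \<ge> eps / 2 \<longrightarrow> (\<forall>s\<in>{0..1}.
            opnorm (X s) \<le> pi * sqrt 5 / 2 * (W / eps)
          \<and> opnorm (vector_derivative X (at s) ** P s) \<le> pi\<^sup>2 / sqrt 2 * (W / eps)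
          \<and> 2 * opnorm (X s) + opnorm (vector_derivative X (at s) ** P s) \<le> 15 * (W / eps)))"
proof -
  have xr: "norm (rv x) = 1" using unit_r x by auto
  have xs: "norm (sv x) = 1" using unit_s x by auto
  have rr: "cinner (rv x) (rv x) = 1" using xr by (simp add: cinner_self)
  have ss: "cinner (sv x) (sv x) = 1" using xs by (simp add: cinner_self)
  define U where "U = (\<Sum>i\<in>UNIV. (norm (u x i))\<^sup>2)"
  define V where "V = (\<Sum>i\<in>UNIV. (norm (v x i))\<^sup>2)"
  have U0: "0 \<le> U" by (simp add: U_def sum_nonneg)
  have UW: "U \<le> W" using u_bnd x by (simp add: U_def)
  have V0: "0 \<le> V" by (simp add: V_def sum_nonneg)
  have VW: "V \<le> W" using v_bnd x by (simp add: V_def)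
  have uu: "(\<Sum>i\<in>UNIV. cinner (u x i) (u x i)) = of_real U" by (simp add: U_def cinner_self)
  have vv: "(\<Sum>i\<in>UNIV. cinner (v x i) (v x i)) = of_real V" by (simp add: V_def cinner_self)
  define N where "N = sqrt (1 + (eps / sqrt W)\<^sup>2 * U)"
  have N1: "1 \<le> N" unfolding N_def using U0 by simp
  have Npos: "0 < N" using N1 by simp
  define A0 where "A0 = (embO False (rv x) :: complex^('n,'a,'d,'m) hidx)"
  define B1 where "B1 = (embO True (sv x) :: complex^('n,'a,'d,'m) hidx)"
  define Pp where "Pp = (\<lambda>s. Psi_plus rv sv u W s eps x :: complex^('n,'a,'d,'m) hidx)"
  define Pm where "Pm = (\<lambda>s. Psi_minus rv sv v W s eps x :: complex^('n,'a,'d,'m) hidx)"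
  define km where "km = (\<lambda>s. k_minus rv sv s x :: complex^('n,'a,'d,'m) hidx)"
  define kp where "kp = (\<lambda>s. k_plus rv sv s x :: complex^('n,'a,'d,'m) hidx)"
  define Dm where "Dm = (\<lambda>s. - (pi/2) *\<^sub>R kp s + (pi * ((cos (theta s))\<^sup>2 - (sin (theta s))\<^sup>2) * sqrt W / eps) *\<^sub>R Rm x (v x))"
  have Pp_rep: "Pp s = of_real (cos (theta s)) *s A0 + of_real (sin (theta s)) *s B1
      + of_real (eps / sqrt W) *s Qp x (u x) + 0 *s Rm x (v x)" for s
    by (simp add: Pp_def Psi_plus_eq A0_def B1_def)
  have Pm_rep: "Pm s = of_real (- sin (theta s)) *s A0 + of_real (cos (theta s)) *s B1
      + 0 *s Qp x (u x) + of_real (xi s * sqrt W / eps) *s Rm x (v x)" for s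
    by (simp add: Pm_def Psi_minus_eq A0_def B1_def)
  have km_rep: "km s = of_real (- sin (theta s)) *s A0 + of_real (cos (theta s)) *s B1
      + 0 *s Qp x (u x) + 0 *s Rm x (v x)" for s
    by (simp add: km_def k_minus_def A0_def B1_def scaleR_as_scaleC)
  have Dm_rep: "Dm s = of_real (- (pi/2) * cos (theta s)) *s A0 + of_real (- (pi/2) * sin (theta s)) *s B1
      + 0 *s Qp x (u x) + of_real (pi * ((cos (theta s))\<^sup>2 - (sin (theta s))\<^sup>2) * sqrt W / eps) *s Rm x (v x)" for s
    by (simp add: Dm_def kp_def k_plus_def A0_def B1_def scaleR_add_right scaleR_as_scaleC vector_add_ldistrib vector_smult_assoc)
  have cPP: "(norm (Pp s))\<^sup>2 = 1 + (eps / sqrt W)\<^sup>2 * U" for s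
    unfolding norm_sq_cinner Pp_rep A0_def B1_def cinner_gen
    by (simp add: rr ss uu power2_eq_square flip: of_real_mult)
  have normPp: "norm (Pp s) = N" for s
    unfolding N_def using cPP[of s] by (metis norm_ge_zero real_sqrt_unique)
  have normPp': "norm (Psi_plus rv sv u W s eps x) = N" for s
    using normPp[of s] by (simp add: Pp_def)
  have psi_eq: "psi_plus rv sv u W s eps x = (1/N) *\<^sub>R Psi_plus rv sv u W s eps x" for s
    by (simp add: psi_plus_def normPp')
  define ps where "ps = (\<lambda>s. (1/N) *\<^sub>R Pp s)"
  define c where "c = pi / (2 * N)"
  have P_eq: "P = (\<lambda>s. outer (ps s) (ps s))"
    by (rule ext) (simp add: P_def psi_eq ps_def Pp_def)
  have X_eq: "X = (\<lambda>s. outer (c *\<^sub>R Pm s) (ps s))"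
    by (rule ext) (simp add: X_def psi_eq ps_def Pp_def Pm_def normPp' c_def outer_scaleR_left)
  define dps where "dps = (\<lambda>s. ((1/N) * (pi/2)) *\<^sub>R km s)"
  have d_ps: "(ps has_vector_derivative dps s) (at s)" for s
  proof -
    have "((\<lambda>s. (1/N) *\<^sub>R Pp s) has_vector_derivative ((1/N) *\<^sub>R ((pi/2) *\<^sub>R km s) + 0 *\<^sub>R Pp s)) (at s)"
      by (rule has_vector_derivative_scaleR[OF DERIV_const]) (simp add: Pp_def km_def Psi_plus_deriv)
    then show ?thesis by (simp add: ps_def dps_def)
  qed
  have d_Pm: "(Pm has_vector_derivative Dm s) (at s)" for s
    unfolding Pm_def Dm_def kp_def Rm_def using Psi_minus_deriv[of eps rv sv v W x s] eps by simp
  have d_cPm: "((\<lambda>s. c *\<^sub>R Pm s) has_vector_derivative c *\<^sub>R Dm s) (at s)" for s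
    using has_vector_derivative_scaleR[OF DERIV_const d_Pm, of c s] by simp
  have vdP: "vector_derivative P (at s) = outer (ps s) (dps s) + outer (dps s) (ps s)" for s
    unfolding P_eq
    by (rule vector_derivative_at, rule bounded_bilinear.has_vector_derivative[OF bounded_bilinear_outer d_ps d_ps])
  have vdX: "vector_derivative X (at s) = outer (c *\<^sub>R Pm s) (dps s) + outer (c *\<^sub>R Dm s) (ps s)" for s
    unfolding X_eq
    by (rule vector_derivative_at, rule bounded_bilinear.has_vector_derivative[OF bounded_bilinear_outer d_cPm d_ps])
  have norm_ps: "norm (ps s) = 1" for s
    using Npos by (simp add: ps_def normPp)
  have c_psps: "cinner (ps s) (ps s) = 1" for s
    by (simp add: cinner_self norm_ps)
  have c_km_Pp: "cinner (km s) (Pp s) = 0" for s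
    unfolding km_rep Pp_rep A0_def B1_def cinner_gen
    by (simp add: rr ss algebra_simps)
  have c_dps_ps: "cinner (dps s) (ps s) = 0" for s
    by (simp add: dps_def ps_def cinner_scaleR_left cinner_scaleR_right c_km_Pp)
  have orth: "cinner (Pp s) (Psi_minus rv sv v W s eps y) = 0" if y: "y \<in> XX" for s y
  proof -
    have QR: "cinner (Qp x (u x) :: complex^('n,'a,'d,'m) hidx) (Rm y (v y)) = (cinner (rv x) (rv y) - cinner (sv x) (sv y)) / 2"
    proof -
      have "cinner (rv x) (rv y) - cinner (sv x) (sv y) = (\<Sum>i\<in>UNIV. Delta i $ x $ y * cinner (u x i) (v y i))"
        using decomp x y by (simp add: gram_def)
      also have "\<dots> = 2 * (\<Sum>i\<in>UNIV. (if x i = y i then 0 else 1/2) * cinner (u x i) (v y i))"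
        unfolding sum_distrib_left by (intro sum.cong refl) (simp add: Delta_def)
      finally show ?thesis by (simp add: cinner_Qp_Rm)
    qed
    have ab: "complex_of_real (eps / sqrt W) * complex_of_real (xi s * sqrt W / eps)
        = 2 * complex_of_real (cos (theta s)) * complex_of_real (sin (theta s))"
    proof -
      have "(eps / sqrt W) * (xi s * sqrt W / eps) = 2 * cos (theta s) * sin (theta s)"
        using eps W_pos by (simp add: xi_def field_simps)
      then have "complex_of_real ((eps / sqrt W) * (xi s * sqrt W / eps)) = complex_of_real (2 * cos (theta s) * sin (theta s))"
        by simp
      then show ?thesis by (simp only: of_real_mult of_real_numeral)
    qed
    have "cinner (Pp s) (Psi_minus rv sv v W s eps y) =
       complex_of_real (cos (theta s)) * complex_of_real (- sin (theta s)) * cinner (rv x) (rv y)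
     + complex_of_real (sin (theta s)) * complex_of_real (cos (theta s)) * cinner (sv x) (sv y)
     + (complex_of_real (eps / sqrt W) * complex_of_real (xi s * sqrt W / eps)) * cinner (Qp x (u x) :: complex^('n,'a,'d,'m) hidx) (Rm y (v y))"
      unfolding Pp_rep Psi_minus_eq A0_def B1_def cinner_add_left cinner_add_right cinner_scaleC_left cinner_scaleC_right
      by simp
    also have "\<dots> = 0" unfolding ab QR by (simp add: field_simps)
    finally show ?thesis .
  qed
  have mvR: "M *v (r *\<^sub>R w) = r *\<^sub>R (M *v w)" for M :: "complex^('n,'a,'d,'m) hidx^('n,'a,'d,'m) hidx" and r w
    by (simp add: scaleR_as_scaleC matrix_vector_scaleC)
  have Hmv: "H s *v w = Lambda XX rv sv v W s eps *v w - Pi_x x *v w" for s w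
    by (simp add: H_def H_x_def matrix_vector_mult_diff_rdistrib)
  have perp: "cinner (ps s) (H s *v w) = 0" for s w
  proof -
    have "\<forall>b\<in>(\<lambda>y. Psi_minus rv sv v W s eps y) ` XX. cinner (ps s) b = 0"
      using orth by (auto simp: ps_def cinner_scaleR_left)
    then have 1: "cinner (ps s) (Lambda XX rv sv v W s eps *v w) = 0"
      unfolding Lambda_def by (rule orth_proj_perp)
    have "cinner (Pp s) (Pi_x x *v w) = 0"
      unfolding Pp_rep A0_def B1_def cinner_add_left cinner_scaleC_left
      by (simp add: cinner_embO_Pi cinner_Qp_Pi)
    then have 2: "cinner (ps s) (Pi_x x *v w) = 0"
      by (simp add: ps_def cinner_scaleR_left)
    show ?thesis using 1 2 by (simp add: Hmv cinner_diff_right)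
  qed
  have XH: "X s ** H s = 0" for s
    unfolding X_eq by (rule outer_matrix_zero) (rule perp)
  have HPm: "H s *v Pm s = km s" for s
  proof -
    have "Pm s \<in> vec.span ((\<lambda>y. Psi_minus rv sv v W s eps y) ` XX)"
      using x by (auto simp: Pm_def intro!: vec.span_base)
    then have 1: "Lambda XX rv sv v W s eps *v Pm s = Pm s"
      unfolding Lambda_def by (rule orth_proj_fix)
    have 2: "Pi_x x *v Pm s = of_real (xi s * sqrt W / eps) *s Rm x (v x)"
      unfolding Pm_rep A0_def B1_def matrix_vector_right_distrib matrix_vector_scaleC
      by (simp add: Pi_x_embO Pi_x_Rm)
    show ?thesis unfolding Hmv 1 2 by (simp add: Pm_rep km_rep)
  qed
  have HX: "H s ** X s = c *\<^sub>R outer (km s) (ps s)" for s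
    by (simp add: X_eq matrix_outer_right mvR HPm outer_scaleR_left matrix_scaleR_right)
  have PdP: "vector_derivative P (at s) ** P s = c *\<^sub>R outer (km s) (ps s)" for s
  proof -
    have "vector_derivative P (at s) ** P s = outer (dps s) (ps s)"
      unfolding vdP by (simp add: P_eq matrix_add_rdistrib' outer_outer c_dps_ps c_psps)
    also have "\<dots> = c *\<^sub>R outer (km s) (ps s)"
      by (simp add: dps_def c_def outer_scaleR_left)
    finally show ?thesis .
  qed
  have part1: "\<forall>s\<in>{0..1}. H s ** X s - X s ** H s = H s ** X s
                  \<and> H s ** X s = vector_derivative P (at s) ** P s"
    by (simp add: XH HX PdP)
  have nPm: "(norm (Pm s))\<^sup>2 = 1 + (xi s * sqrt W / eps)\<^sup>2 * V" for s
  proof -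
    have "(norm (Pm s))\<^sup>2 = ((sin (theta s))\<^sup>2 + (cos (theta s))\<^sup>2) + (xi s * sqrt W / eps)\<^sup>2 * V"
      unfolding norm_sq_cinner Pm_rep A0_def B1_def cinner_gen
      by (simp add: rr ss vv power2_eq_square flip: of_real_mult)
    then show ?thesis by simp
  qed
  have nDm: "(norm (Dm s))\<^sup>2 = (pi/2)\<^sup>2 + (pi * ((cos (theta s))\<^sup>2 - (sin (theta s))\<^sup>2) * sqrt W / eps)\<^sup>2 * V" for s
  proof -
    have "(norm (Dm s))\<^sup>2 = (pi/2)\<^sup>2 * ((cos (theta s))\<^sup>2 + (sin (theta s))\<^sup>2) + (pi * ((cos (theta s))\<^sup>2 - (sin (theta s))\<^sup>2) * sqrt W / eps)\<^sup>2 * V"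
    proof -
      have e: "pi * (pi * (cos (theta s) * cos (theta s))) + pi * (pi * (sin (theta s) * sin (theta s))) = pi * pi"
      proof -
        have "pi * (pi * (cos (theta s) * cos (theta s))) + pi * (pi * (sin (theta s) * sin (theta s)))
            = pi * (pi * (cos (theta s) * cos (theta s) + sin (theta s) * sin (theta s)))"
          by (simp only: distrib_left)
        then show ?thesis by simp
      qed
      show ?thesis
        unfolding norm_sq_cinner Dm_rep A0_def B1_def cinner_gen
        by (simp add: rr ss vv power2_eq_square algebra_simps e flip: of_real_mult)
    qed
    then show ?thesis by simp
  qed
  have VdXP: "vector_derivative X (at s) ** P s = outer (c *\<^sub>R Dm s) (ps s)" for s
    unfolding vdX by (simp add: P_eq matrix_add_rdistrib' outer_outer c_dps_ps c_psps)
  have part2: "W \<ge> eps / 2 \<longrightarrow> (\<forall>s\<in>{0..1}.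
            opnorm (X s) \<le> pi * sqrt 5 / 2 * (W / eps)
          \<and> opnorm (vector_derivative X (at s) ** P s) \<le> pi\<^sup>2 / sqrt 2 * (W / eps)
          \<and> 2 * opnorm (X s) + opnorm (vector_derivative X (at s) ** P s) \<le> 15 * (W / eps))"
  proof (intro impI ballI)
    fix s :: real
    assume hW: "eps / 2 \<le> W"
    define r where "r = W / eps"
    have r0: "0 < r" using W_pos eps by (simp add: r_def)
    have rh: "1/2 \<le> r" using hW eps by (simp add: r_def field_simps)
    have r4: "1 \<le> 4 * r\<^sup>2"
    proof -
      have "(1/2)\<^sup>2 \<le> r\<^sup>2" using rh by (intro power_mono) auto
      then show ?thesis by (simp add: power2_eq_square)
    qed
    have c0: "0 \<le> c" using Npos by (simp add: c_def)
    have c1: "c \<le> pi / 2"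
    proof -
      have "pi / (2 * N) \<le> pi / (2 * 1)" using N1 by (intro divide_left_mono) auto
      then show ?thesis by (simp add: c_def)
    qed
    have Wsq: "(sqrt W / eps)\<^sup>2 = W / eps\<^sup>2" using W_pos by (simp add: power_divide)
    have rsq: "r\<^sup>2 = W / eps\<^sup>2 * W" by (simp add: r_def power2_eq_square)
    have xi1: "(xi s)\<^sup>2 \<le> 1"
    proof -
      have "xi s = sin (2 * theta s)" unfolding xi_def sin_double by (simp add: mult_ac)
      then show ?thesis using abs_sin_le_one[of "2 * theta s"] by (simp add: abs_square_le_1)
    qed
    have dd1: "((cos (theta s))\<^sup>2 - (sin (theta s))\<^sup>2)\<^sup>2 \<le> 1"
    proof -
      have "(cos (theta s))\<^sup>2 - (sin (theta s))\<^sup>2 = cos (2 * theta s)" by (simp add: cos_double)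
      then show ?thesis using abs_cos_le_one[of "2 * theta s"] by (simp add: abs_square_le_1)
    qed
    have bPm: "norm (Pm s) \<le> sqrt 5 * r"
    proof -
      have "(xi s * sqrt W / eps)\<^sup>2 * V = (xi s)\<^sup>2 * (W / eps\<^sup>2) * V"
      proof -
        have e1: "xi s * sqrt W / eps = xi s * (sqrt W / eps)" by simp
        show ?thesis unfolding e1 power_mult_distrib Wsq by (rule refl)
      qed
      also have "\<dots> \<le> 1 * (W / eps\<^sup>2) * W"
        using xi1 VW V0 W_pos by (intro mult_mono) auto
      finally have "(norm (Pm s))\<^sup>2 \<le> 1 + r\<^sup>2" using nPm[of s] rsq by simp
      also have "\<dots> \<le> (sqrt 5 * r)\<^sup>2" using r4 by (simp add: power_mult_distrib)
      finally have "(norm (Pm s))\<^sup>2 \<le> (sqrt 5 * r)\<^sup>2" .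
      moreover have "0 \<le> sqrt 5 * r" using r0 by simp
      ultimately show ?thesis by (rule power2_le_imp_le)
    qed
    have bDm: "norm (Dm s) \<le> sqrt 2 * pi * r"
    proof -
      have "(pi * ((cos (theta s))\<^sup>2 - (sin (theta s))\<^sup>2) * sqrt W / eps)\<^sup>2 * V
          = pi\<^sup>2 * (((cos (theta s))\<^sup>2 - (sin (theta s))\<^sup>2)\<^sup>2 * (W / eps\<^sup>2) * V)"
      proof -
        have e2: "pi * ((cos (theta s))\<^sup>2 - (sin (theta s))\<^sup>2) * sqrt W / eps
           = (pi * ((cos (theta s))\<^sup>2 - (sin (theta s))\<^sup>2)) * (sqrt W / eps)" by simp
        show ?thesis unfolding e2 power_mult_distrib Wsq by (simp only: mult_ac)
      qed
      also have "\<dots> \<le> pi\<^sup>2 * (1 * (W / eps\<^sup>2) * W)"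
        using dd1 VW V0 W_pos by (intro mult_left_mono mult_mono) auto
      finally have "(norm (Dm s))\<^sup>2 \<le> (pi/2)\<^sup>2 + pi\<^sup>2 * r\<^sup>2" using nDm[of s] rsq by simp
      also have "\<dots> \<le> (sqrt 2 * pi * r)\<^sup>2"
      proof -
        have "pi\<^sup>2 * 1 \<le> pi\<^sup>2 * (4 * r\<^sup>2)" using r4 by (intro mult_left_mono) auto
        then show ?thesis by (simp add: power_mult_distrib power_divide)
      qed
      finally have "(norm (Dm s))\<^sup>2 \<le> (sqrt 2 * pi * r)\<^sup>2" .
      moreover have "0 \<le> sqrt 2 * pi * r" using r0 by simp
      ultimately show ?thesis by (rule power2_le_imp_le)
    qed
    have op1: "opnorm (X s) \<le> pi * sqrt 5 / 2 * r"
    proof -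
      have "opnorm (X s) \<le> norm (c *\<^sub>R Pm s) * norm (ps s)"
        unfolding X_eq by (rule opnorm_outer)
      also have "\<dots> = c * norm (Pm s)" using c0 by (simp add: norm_ps)
      also have "\<dots> \<le> (pi / 2) * (sqrt 5 * r)" using c0 c1 bPm by (intro mult_mono) auto
      finally show ?thesis by simp
    qed
    have op2: "opnorm (vector_derivative X (at s) ** P s) \<le> pi\<^sup>2 / sqrt 2 * r"
    proof -
      have "opnorm (vector_derivative X (at s) ** P s) \<le> norm (c *\<^sub>R Dm s) * norm (ps s)"
        unfolding VdXP by (rule opnorm_outer)
      also have "\<dots> = c * norm (Dm s)" using c0 by (simp add: norm_ps)
      also have "\<dots> \<le> (pi / 2) * (sqrt 2 * pi * r)" using c0 c1 bDm by (intro mult_mono) auto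
      also have "\<dots> = pi\<^sup>2 / sqrt 2 * r"
      proof -
        have "sqrt 2 / 2 = 1 / sqrt 2" by (simp add: field_simps)
        then show ?thesis by (simp add: power2_eq_square field_simps)
      qed
      finally show ?thesis .
    qed
    have "2 * opnorm (X s) + opnorm (vector_derivative X (at s) ** P s) \<le> (pi * sqrt 5 + pi\<^sup>2 / sqrt 2) * r"
      using op1 op2 by (simp add: algebra_simps)
    also have "\<dots> \<le> 15 * r" using numeric_bound r0 by (intro mult_right_mono) auto
    finally show "opnorm (X s) \<le> pi * sqrt 5 / 2 * (W / eps)
          \<and> opnorm (vector_derivative X (at s) ** P s) \<le> pi\<^sup>2 / sqrt 2 * (W / eps)
          \<and> 2 * opnorm (X s) + opnorm (vector_derivative X (at s) ** P s) \<le> 15 * (W / eps)"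
      using op1 op2 by (simp add: r_def)
  qed
  show ?thesis using part1 part2 by blast
qed

end
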